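(* Let $\mathit{VI}$ be a finite set of variables with $\#\mathit{VI}=n$. If $j,k\in\mathbb{N}$ with $1\le j<k\le n$, then $\mathrm{MI}(\mathit{TSD}_k)\cap\mathit{TSD}_j=\mathrm{dAtoms}(\mathit{TSD}_j)$.
   Context: $\mathit{SG}=\wp(\mathit{VI})\setminus\{\emptyset\}$, $\mathit{SH}=\wp(\mathit{SG})$ ordered by inclusion. For $1\le m\le n$, $\rho_{\mathit{TSD}_m}(sh)=\{\,S\in\mathit{SG}\mid \forall T\subseteq S:\ \#T<m\implies S=\bigcup\{U\in sh\mid T\subseteq U\subseteq S\}\,\}$ and $\mathit{TSD}_m=\rho_{\mathit{TSD}_m}(\mathit{SH})$, a complete lattice under inclusion (meet = intersection, top $\mathit{SG}$). $\mathrm{MI}(C)$: meet-irreducible elements of $C$ ($x=y\wedge z\Rightarrow x=y$ or $x=z$); $\mathrm{dAtoms}(C)$: dual-atoms ($x\ne\top$ with $x\le y<\top\Rightarrow x=y$). *)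

theory Defs
  imports Main
begin

definition SG :: "'a set \<Rightarrow> 'a set set" where
  "SG VI = Pow VI - {{}}"

definition SH :: "'a set \<Rightarrow> 'a set set set" where
  "SH VI = Pow (SG VI)"

definition rho_TSD :: "nat \<Rightarrow> 'a set \<Rightarrow> 'a set set \<Rightarrow> 'a set set" where
  "rho_TSD m VI sh = {S \<in> SG VI. \<forall>T. T \<subseteq> S \<longrightarrow> card T < m \<longrightarrow>
       S = \<Union>{U \<in> sh. T \<subseteq> U \<and> U \<subseteq> S}}"

definition TSD :: "nat \<Rightarrow> 'a set \<Rightarrow> 'a set set set" where
  "TSD m VI = rho_TSD m VI ` SH VI"

definition MI :: "'b set set \<Rightarrow> 'b set \<Rightarrow> 'b set set" where
  "MI C tp = {x \<in> C. x \<noteq> tp \<and>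
      (\<forall>y\<in>C. \<forall>z\<in>C. x = y \<inter> z \<longrightarrow> x = y \<or> x = z)}"

definition dAtoms :: "'b set set \<Rightarrow> 'b set \<Rightarrow> 'b set set" where
  "dAtoms C tp = {x \<in> C. x \<noteq> tp \<and> (\<forall>y\<in>C. x \<subseteq> y \<and> y \<noteq> tp \<longrightarrow> x = y)}"

end

theory Submission
  imports Defs
begin

lemma rho_sub: "rho_TSD m VI sh \<subseteq> SG VI"
  unfolding rho_TSD_def by auto

lemma rho_ext: "sh \<subseteq> SG VI \<Longrightarrow> sh \<subseteq> rho_TSD m VI sh"
  unfolding rho_TSD_def by blast

lemma rho_idem_sub: "rho_TSD m VI (rho_TSD m VI sh) \<subseteq> rho_TSD m VI sh"
proof
  fix S assume S: "S \<in> rho_TSD m VI (rho_TSD m VI sh)"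
  show "S \<in> rho_TSD m VI sh"
    unfolding rho_TSD_def
  proof (intro CollectI conjI allI impI)
    show "S \<in> SG VI" using S rho_sub by blast
    fix T assume T: "T \<subseteq> S" "card T < m"
    have eq: "S = \<Union>{U \<in> rho_TSD m VI sh. T \<subseteq> U \<and> U \<subseteq> S}"
      using S T unfolding rho_TSD_def by blast
    have "\<And>U. U \<in> rho_TSD m VI sh \<Longrightarrow> T \<subseteq> U \<Longrightarrow> U = \<Union>{V \<in> sh. T \<subseteq> V \<and> V \<subseteq> U}"
      using T unfolding rho_TSD_def by blast
    show "S = \<Union>{U \<in> sh. T \<subseteq> U \<and> U \<subseteq> S}"
    proof
      show "S \<subseteq> \<Union>{U \<in> sh. T \<subseteq> U \<and> U \<subseteq> S}"
      proof
        fix a assume "a \<in> S"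
        then obtain U where U: "U \<in> rho_TSD m VI sh" "T \<subseteq> U" "U \<subseteq> S" "a \<in> U"
          using eq by blast
        then have "U = \<Union>{V \<in> sh. T \<subseteq> V \<and> V \<subseteq> U}"
          using \<open>\<And>U. U \<in> rho_TSD m VI sh \<Longrightarrow> T \<subseteq> U \<Longrightarrow> U = _\<close> by blast
        then obtain V where "V \<in> sh" "T \<subseteq> V" "V \<subseteq> U" "a \<in> V" using U(4) by blast
        then show "a \<in> \<Union>{U \<in> sh. T \<subseteq> U \<and> U \<subseteq> S}" using U(3) by blast
      qed
    qed blast
  qed
qed

lemma TSD_fix: "x \<in> TSD m VI \<Longrightarrow> rho_TSD m VI x = x"
proof -
  assume "x \<in> TSD m VI"
  then obtain sh where x: "x = rho_TSD m VI sh" unfolding TSD_def by blast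
  show ?thesis unfolding x
    by (rule subset_antisym[OF rho_idem_sub rho_ext[OF rho_sub]])
qed

lemma TSD_SG: "x \<in> TSD m VI \<Longrightarrow> x \<subseteq> SG VI"
  unfolding TSD_def using rho_sub by blast

lemma rho_in_TSD: "sh \<subseteq> SG VI \<Longrightarrow> rho_TSD m VI sh \<in> TSD m VI"
  unfolding TSD_def SH_def by blast

lemma exists_small:
  assumes fin: "finite VI" and x: "x \<in> TSD j VI" and ne: "x \<noteq> SG VI"
  shows "\<exists>S0 \<in> SG VI - x. card S0 \<le> j"
proof -
  have xs: "x \<subseteq> SG VI" using TSD_SG[OF x] .
  then have "SG VI - x \<noteq> {}" using ne by blast
  then obtain S1 where S1: "S1 \<in> SG VI - x" by blast
  define S0 where "S0 = arg_min card (\<lambda>S. S \<in> SG VI - x)"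
  have S0: "S0 \<in> SG VI - x"
    and mn: "\<And>S. S \<in> SG VI - x \<Longrightarrow> card S0 \<le> card S"
    using arg_min_nat_lemma[of "\<lambda>S. S \<in> SG VI - x" S1 card, OF S1] unfolding S0_def by auto
  have S0VI: "S0 \<subseteq> VI" "S0 \<noteq> {}" using S0 unfolding SG_def by auto
  have fS0: "finite S0" using S0VI fin finite_subset by blast
  show ?thesis
  proof (rule ccontr)
    assume "\<not> ?thesis"
    then have "\<not> card S0 \<le> j" using S0 by blast
    then have big: "card S0 > j" by simp
    have "S0 \<in> rho_TSD j VI x"
      unfolding rho_TSD_def
    proof (intro CollectI conjI allI impI)
      show "S0 \<in> SG VI" using S0 by blast
      fix T assume T: "T \<subseteq> S0" "card T < j"
      have fT: "finite T" using T(1) fS0 finite_subset by blast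
      have "card (S0 - T) = card S0 - card T" using fT T(1) by (simp add: card_Diff_subset)
      then have c2: "card (S0 - T) \<ge> 2" using T(2) big by linarith
      show "S0 = \<Union>{U \<in> x. T \<subseteq> U \<and> U \<subseteq> S0}"
      proof
        show "S0 \<subseteq> \<Union>{U \<in> x. T \<subseteq> U \<and> U \<subseteq> S0}"
        proof
          fix a assume a: "a \<in> S0"
          have "\<exists>b. b \<in> S0 - T \<and> b \<noteq> a"
          proof (rule ccontr)
            assume "\<not> ?thesis"
            then have "S0 - T \<subseteq> {a}" by blast
            then have "card (S0 - T) \<le> card {a}" by (intro card_mono) auto
            then show False using c2 by simp
          qed
          then obtain b where b: "b \<in> S0 - T" "b \<noteq> a" by blast
          let ?U = "S0 - {b}"
          have "card ?U < card S0" using b fS0 by (intro card_Diff1_less) auto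
          moreover have "?U \<in> SG VI" using a b S0VI unfolding SG_def by auto
          ultimately have "?U \<in> x" using mn by (meson DiffI not_le)
          then show "a \<in> \<Union>{U \<in> x. T \<subseteq> U \<and> U \<subseteq> S0}" using a b T by blast
        qed
      qed blast
    qed
    then show False using TSD_fix[OF x] S0 by blast
  qed
qed

lemma SG_minus:
  assumes fin: "finite VI" and S0: "S0 \<in> SG VI" and c: "card S0 \<le> m"
  shows "SG VI - {S0} \<in> TSD m VI"
proof -
  have eq: "rho_TSD m VI (SG VI - {S0}) = SG VI - {S0}"
  proof
    show "SG VI - {S0} \<subseteq> rho_TSD m VI (SG VI - {S0})" by (rule rho_ext) blast
    show "rho_TSD m VI (SG VI - {S0}) \<subseteq> SG VI - {S0}"
    proof
      fix S assume S: "S \<in> rho_TSD m VI (SG VI - {S0})"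
      have "S \<noteq> S0"
      proof
        assume "S = S0"
        have S0VI: "S0 \<subseteq> VI" "S0 \<noteq> {}" using S0 unfolding SG_def by auto
        have fS0: "finite S0" using S0VI fin finite_subset by blast
        obtain a where a: "a \<in> S0" using S0VI by blast
        let ?T = "S0 - {a}"
        have "card ?T < m" using a fS0 c
          by (metis card_Diff1_less order_less_le_trans)
        then have "S0 = \<Union>{U \<in> SG VI - {S0}. ?T \<subseteq> U \<and> U \<subseteq> S0}"
          using S \<open>S = S0\<close> unfolding rho_TSD_def by blast
        moreover have "\<And>U. ?T \<subseteq> U \<Longrightarrow> U \<subseteq> S0 \<Longrightarrow> U \<noteq> S0 \<Longrightarrow> a \<notin> U"
          using a by blast
        ultimately show False using a by blast
      qed
      then show "S \<in> SG VI - {S0}" using S rho_sub by blast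
    qed
  qed
  show ?thesis using rho_in_TSD[of "SG VI - {S0}" VI m] eq by simp
qed

lemma key:
  assumes fin: "finite VI" and x: "rho_TSD j VI x = x" and jk: "j < k"
    and S0x: "S0 \<notin> x"
    and S: "S \<in> rho_TSD k VI (insert S0 x)" and SS0: "S \<noteq> S0"
  shows "S \<in> x"
proof -
  have SSG: "S \<in> SG VI" using S rho_sub by blast
  have fS: "finite S" using SSG fin unfolding SG_def by (auto intro: finite_subset)
  have "S \<in> rho_TSD j VI x"
    unfolding rho_TSD_def
  proof (intro CollectI conjI allI impI)
    show "S \<in> SG VI" by (rule SSG)
    fix T assume T: "T \<subseteq> S" "card T < j"
    show "S = \<Union>{U \<in> x. T \<subseteq> U \<and> U \<subseteq> S}"
    proof
      show "S \<subseteq> \<Union>{U \<in> x. T \<subseteq> U \<and> U \<subseteq> S}"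
      proof
        fix a assume a: "a \<in> S"
        let ?T = "insert a T"
        have fT: "finite T" using T fS finite_subset by blast
        have "card ?T < k" using T jk fT by (simp add: card_insert_if)
        moreover have "?T \<subseteq> S" using a T by blast
        ultimately have eq: "S = \<Union>{U \<in> insert S0 x. ?T \<subseteq> U \<and> U \<subseteq> S}"
          using S unfolding rho_TSD_def by blast
        then obtain U where U: "U \<in> insert S0 x" "?T \<subseteq> U" "U \<subseteq> S" "a \<in> U" using a by blast
        show "a \<in> \<Union>{U \<in> x. T \<subseteq> U \<and> U \<subseteq> S}"
        proof (cases "U = S0")
          case False
          then show ?thesis using U by blast
        next
          case True
          then obtain b where b: "b \<in> S" "b \<notin> S0" using U(3) SS0 by blast
          then obtain U' where U': "U' \<in> insert S0 x" "?T \<subseteq> U'" "U' \<subseteq> S" "b \<in> U'"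
            using eq by blast
          then have "U' \<in> x" using b by blast
          then show ?thesis using U' by blast
        qed
      qed
    qed blast
  qed
  then show ?thesis using x by simp
qed

theorem corollary4p6:
  fixes VI :: "'a set" and n j k :: nat
  assumes "finite VI" and "card VI = n"
    and "1 \<le> j" and "j < k" and "k \<le> n"
  shows "MI (TSD k VI) (SG VI) \<inter> TSD j VI = dAtoms (TSD j VI) (SG VI)"
proof
  show "MI (TSD k VI) (SG VI) \<inter> TSD j VI \<subseteq> dAtoms (TSD j VI) (SG VI)"
  proof
    fix x assume xin: "x \<in> MI (TSD k VI) (SG VI) \<inter> TSD j VI"
    then have xj: "x \<in> TSD j VI" and xk: "x \<in> TSD k VI" and ne: "x \<noteq> SG VI"
      and irr: "\<forall>y\<in>TSD k VI. \<forall>z\<in>TSD k VI. x = y \<inter> z \<longrightarrow> x = y \<or> x = z"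
      unfolding MI_def by auto
    obtain S0 where S0: "S0 \<in> SG VI - x" "card S0 \<le> j"
      using exists_small[OF assms(1) xj ne] by blast
    have xs: "x \<subseteq> SG VI" using TSD_SG[OF xj] .
    define y where "y = SG VI - {S0}"
    define z where "z = rho_TSD k VI (insert S0 x)"
    have yk: "y \<in> TSD k VI" unfolding y_def
      using SG_minus[OF assms(1)] S0 assms(4) by auto
    have isub: "insert S0 x \<subseteq> SG VI" using S0 xs by blast
    have zk: "z \<in> TSD k VI" unfolding z_def using isub by (rule rho_in_TSD)
    have zsup: "insert S0 x \<subseteq> z" unfolding z_def using isub by (rule rho_ext)
    have "x = y \<inter> z"
    proof
      show "x \<subseteq> y \<inter> z" using xs S0 zsup unfolding y_def by blast
      show "y \<inter> z \<subseteq> x"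
      proof
        fix S assume "S \<in> y \<inter> z"
        then have "S \<in> rho_TSD k VI (insert S0 x)" "S \<noteq> S0" unfolding y_def z_def by auto
        then show "S \<in> x" using key[OF assms(1) TSD_fix[OF xj] assms(4)] S0 by blast
      qed
    qed
    then have "x = y \<or> x = z" using irr yk zk by blast
    moreover have "x \<noteq> z" using zsup S0 by blast
    ultimately have xy: "x = y" by blast
    show "x \<in> dAtoms (TSD j VI) (SG VI)"
      unfolding dAtoms_def
    proof (intro CollectI conjI ballI impI)
      show "x \<in> TSD j VI" by (rule xj)
      show "x \<noteq> SG VI" by (rule ne)
      fix w assume w: "w \<in> TSD j VI" "x \<subseteq> w \<and> w \<noteq> SG VI"
      then show "x = w" using TSD_SG[OF w(1)] xy unfolding y_def by blast
    qed
  qed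
  show "dAtoms (TSD j VI) (SG VI) \<subseteq> MI (TSD k VI) (SG VI) \<inter> TSD j VI"
  proof
    fix x assume "x \<in> dAtoms (TSD j VI) (SG VI)"
    then have xj: "x \<in> TSD j VI" and ne: "x \<noteq> SG VI"
      and mx: "\<forall>y\<in>TSD j VI. x \<subseteq> y \<and> y \<noteq> SG VI \<longrightarrow> x = y"
      unfolding dAtoms_def by auto
    obtain S0 where S0: "S0 \<in> SG VI - x" "card S0 \<le> j"
      using exists_small[OF assms(1) xj ne] by blast
    have xs: "x \<subseteq> SG VI" using TSD_SG[OF xj] .
    have "SG VI - {S0} \<in> TSD j VI" using SG_minus[OF assms(1)] S0 by auto
    moreover have "x \<subseteq> SG VI - {S0}" using xs S0 by blast
    moreover have "SG VI - {S0} \<noteq> SG VI" using S0 by blast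
    ultimately have xeq: "x = SG VI - {S0}" using mx by blast
    have xk: "x \<in> TSD k VI" using SG_minus[OF assms(1)] S0 assms(4) xeq by auto
    have "x \<in> MI (TSD k VI) (SG VI)"
      unfolding MI_def
    proof (intro CollectI conjI ballI impI)
      show "x \<in> TSD k VI" by (rule xk)
      show "x \<noteq> SG VI" by (rule ne)
      fix y z assume yz: "y \<in> TSD k VI" "z \<in> TSD k VI" "x = y \<inter> z"
      have "y \<subseteq> SG VI" "z \<subseteq> SG VI" using TSD_SG yz by auto
      show "x = y \<or> x = z"
      proof (cases "S0 \<in> y")
        case True
        then have "S0 \<notin> z" using yz(3) S0 by blast
        then have "z = x" using \<open>z \<subseteq> SG VI\<close> yz(3) xeq by blast
        then show ?thesis by simp
      next
        case False
        then have "y = x" using \<open>y \<subseteq> SG VI\<close> yz(3) xeq by blast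
        then show ?thesis by simp
      qed
    qed
    then show "x \<in> MI (TSD k VI) (SG VI) \<inter> TSD j VI" using xj by blast
  qed
qed

end
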